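(* There exists an absolute constant $A \geq 10$ such that the following holds. Let $0 < \epsilon < 1$, $H \geq 1$, let $L_{1},L_{2} \subset \mathbb{H}$ be horizontal lines, let $p \in L_{1}$ and $r > 0$. If $$B(p,AH^{3}\epsilon^{-2}r) \cap L_{2} \subset N(L_{1},Hr),$$ then there exists a horizontal line $L \subset \mathbb{V}(L_{1})$ with $B(p,Hr) \cap L_{2} \subset N(L,\epsilon r)$.
   Context: $\mathbb{H}$ is $\mathbb{R}^{3}$ with group law $(x_{1},y_{1},t_{1}) \cdot (x_{2},y_{2},t_{2}) = (x_{1}+x_{2},y_{1}+y_{2},t_{1}+t_{2}+\tfrac{1}{2}(x_{1}y_{2}-x_{2}y_{1}))$, metric $d(p,q) = \|q^{-1}\cdot p\|$ with $\|(x,y,t)\| = \max\{\sqrt{x^{2}+y^{2}},\sqrt{|t|}\}$; $B(p,r)$ is the closed $d$-ball and $N(E,\delta) = \{q : \operatorname{dist}(q,E) \leq \delta\}$. A horizontal line is a set $q \cdot \{(sa,sb,0) : s \in \mathbb{R}\}$ with $(a,b) \neq 0$. For a horizontal line $L$, $\mathbb{V}(L)$ is the unique vertical plane containing $L$, i.e. $\{(x,y,t) : (x,y) \in \pi(L), t \in \mathbb{R}\}$ where $\pi(x,y,t) = (x,y)$. *)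

theory Defs
  imports "HOL-Analysis.Analysis"
begin

type_synonym hpt = "real \<times> real \<times> real"

definition hmult :: "hpt \<Rightarrow> hpt \<Rightarrow> hpt" where
  "hmult p q = (case p of (x1, y1, t1) \<Rightarrow> case q of (x2, y2, t2) \<Rightarrow>
     (x1 + x2, y1 + y2, t1 + t2 + (1/2) * (x1 * y2 - x2 * y1)))"

definition hinv :: "hpt \<Rightarrow> hpt" where
  "hinv p = (case p of (x, y, t) \<Rightarrow> (-x, -y, -t))"

definition hnorm :: "hpt \<Rightarrow> real" where
  "hnorm p = (case p of (x, y, t) \<Rightarrow> max (sqrt (x^2 + y^2)) (sqrt \<bar>t\<bar>))"

definition hdist :: "hpt \<Rightarrow> hpt \<Rightarrow> real" where
  "hdist p q = hnorm (hmult (hinv q) p)"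

definition hball :: "hpt \<Rightarrow> real \<Rightarrow> hpt set" where
  "hball p r = {q. hdist q p \<le> r}"

definition hdist_set :: "hpt \<Rightarrow> hpt set \<Rightarrow> real" where
  "hdist_set q E = Inf ((\<lambda>e. hdist q e) ` E)"

definition hnbhd :: "hpt set \<Rightarrow> real \<Rightarrow> hpt set" where
  "hnbhd E \<delta> = {q. hdist_set q E \<le> \<delta>}"

definition horizontal_line :: "hpt set \<Rightarrow> bool" where
  "horizontal_line L \<longleftrightarrow> (\<exists>q a b. (a, b) \<noteq> (0::real, 0::real) \<and>
      L = {hmult q (s * a, s * b, 0) | s. s \<in> (UNIV :: real set)})"

definition hproj :: "hpt \<Rightarrow> real \<times> real" where
  "hproj p = (fst p, fst (snd p))"

definition vplane :: "hpt set \<Rightarrow> hpt set" where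
  "vplane L = {p. hproj p \<in> hproj ` L}"

end

theory Submission
  imports Defs
begin


definition rot :: "real \<Rightarrow> real \<Rightarrow> hpt \<Rightarrow> hpt" where
  "rot c s z = (case z of (x,y,t) \<Rightarrow> (c*x + s*y, -s*x + c*y, t))"

lemma hmult_simp[simp]: "hmult (x1,y1,t1) (x2,y2,t2) = (x1 + x2, y1 + y2, t1 + t2 + (1/2) * (x1 * y2 - x2 * y1))"
  by (simp add: hmult_def)
lemma hinv_simp[simp]: "hinv (x,y,t) = (-x,-y,-t)" by (simp add: hinv_def)
lemma rot_simp[simp]: "rot c s (x,y,t) = (c*x + s*y, -s*x + c*y, t)" by (simp add: rot_def)
lemma hnorm_simp[simp]: "hnorm (x,y,t) = max (sqrt (x^2 + y^2)) (sqrt \<bar>t\<bar>)" by (simp add: hnorm_def)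

lemma rot_hom:
  assumes "c^2 + s^2 = 1"
  shows "rot c s (hmult u v) = hmult (rot c s u) (rot c s v)"
proof -
  obtain x1 y1 t1 where u: "u = (x1,y1,t1)" by (cases u) auto
  obtain x2 y2 t2 where v: "v = (x2,y2,t2)" by (cases v) auto
  have e: "(c*x1+s*y1)*(-s*x2+c*y2) - (c*x2+s*y2)*(-s*x1+c*y1) = (c^2+s^2)*(x1*y2-x2*y1)"
    by algebra
  show ?thesis unfolding u v using e assms by (simp add: algebra_simps)
qed

lemma rot_inv: "rot c s (hinv u) = hinv (rot c s u)"
  by (cases u) (auto simp: algebra_simps)

lemma rot_norm:
  assumes "c^2 + s^2 = 1"
  shows "hnorm (rot c s u) = hnorm u"
proof -
  obtain x y t where u: "u = (x,y,t)" by (cases u) auto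
  have "(c*x + s*y)^2 + (-s*x + c*y)^2 = (c^2+s^2)*(x^2+y^2)" by algebra
  then show ?thesis unfolding u using assms by simp
qed

lemma inv_mult_inv: "hmult (hinv (hmult (hinv p) w)) (hmult (hinv p) z) = hmult (hinv w) z"
  by (cases p, cases w, cases z) (auto simp: algebra_simps)

lemma hdist_Phi:
  assumes "c^2 + s^2 = 1"
  shows "hdist (rot c s (hmult (hinv p) z)) (rot c s (hmult (hinv p) w)) = hdist z w"
  unfolding hdist_def using assms
  by (simp add: rot_inv[symmetric] rot_hom[symmetric] rot_norm inv_mult_inv)

lemma inv_cancel1[simp]: "hmult (hinv p) (hmult p v) = v"
  by (cases p, cases v) (auto simp: algebra_simps)
lemma inv_cancel2[simp]: "hmult p (hmult (hinv p) v) = v"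
  by (cases p, cases v) (auto simp: algebra_simps)
lemma rot_rot1: assumes "c^2+s^2 = 1" shows "rot c s (rot c (-s) w) = w"
proof -
  obtain x y t where w: "w = (x,y,t)" by (cases w) auto
  have "c*(c*x + - s*y) + s*(s*x + c*y) = (c^2+s^2)*x" "- (s*(c*x + - s*y)) + c*(s*x + c*y) = (c^2+s^2)*y"
    by algebra+
  then show ?thesis using assms w by simp
qed
lemma rot_rot2: assumes "c^2+s^2 = 1" shows "rot c (-s) (rot c s w) = w"
proof -
  obtain x y t where w: "w = (x,y,t)" by (cases w) auto
  have "c*(c*x + s*y) + - s*(- s*x + c*y) = (c^2+s^2)*x" "s*(c*x + s*y) + c*(- s*x + c*y) = (c^2+s^2)*y"
    by algebra+
  then show ?thesis using assms w by simp
qed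



lemma hmult_line: "hmult (hmult q (s0*a, s0*b, 0)) (\<sigma>*a, \<sigma>*b, 0) = hmult q ((s0+\<sigma>)*a, (s0+\<sigma>)*b, 0)"
  by (cases q) (auto simp: algebra_simps)

lemma reparam:
  assumes "horizontal_line L" "z0 \<in> L"
  shows "\<exists>a b. a^2 + b^2 = 1 \<and> L = {hmult z0 (\<sigma>*a, \<sigma>*b, 0) | \<sigma>. \<sigma> \<in> (UNIV::real set)}"
proof -
  obtain q a b where ab: "(a,b) \<noteq> (0::real,0::real)" and L: "L = {hmult q (s * a, s * b, 0) | s. s \<in> (UNIV :: real set)}"
    using assms(1) unfolding horizontal_line_def by blast
  obtain s0 where z0: "z0 = hmult q (s0*a, s0*b, 0)" using assms(2) L by blast
  define n where "n = sqrt (a^2+b^2)"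
  have "a^2+b^2 > 0" using ab by (auto simp: sum_power2_gt_zero_iff)
  then have n: "n > 0" "n^2 = a^2+b^2" unfolding n_def by auto
  have "(a/n)^2 + (b/n)^2 = (a^2+b^2)/n^2" by (simp add: power_divide add_divide_distrib)
  then have unit: "(a/n)^2 + (b/n)^2 = 1" using n ab by auto
  have e: "hmult z0 (\<sigma>*(a/n), \<sigma>*(b/n), 0) = hmult q ((s0+\<sigma>/n)*a, (s0+\<sigma>/n)*b, 0)" for \<sigma>
    unfolding z0 using hmult_line[of q s0 a b "\<sigma>/n"] by (simp add: algebra_simps)
  have "L = {hmult z0 (\<sigma>*(a/n), \<sigma>*(b/n), 0) | \<sigma>. \<sigma> \<in> (UNIV::real set)}"
  proof (intro set_eqI iffI)
    fix w assume "w \<in> L"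
    then obtain \<tau> where w: "w = hmult q (\<tau>*a, \<tau>*b, 0)" using L by blast
    have "w = hmult z0 (((\<tau>-s0)*n)*(a/n), ((\<tau>-s0)*n)*(b/n), 0)" unfolding e w using n by simp
    then show "w \<in> {hmult z0 (\<sigma>*(a/n), \<sigma>*(b/n), 0) | \<sigma>. \<sigma> \<in> (UNIV::real set)}" by blast
  next
    fix w assume "w \<in> {hmult z0 (\<sigma>*(a/n), \<sigma>*(b/n), 0) | \<sigma>. \<sigma> \<in> (UNIV::real set)}"
    then obtain \<sigma> where "w = hmult z0 (\<sigma>*(a/n), \<sigma>*(b/n), 0)" by blast
    then show "w \<in> L" unfolding e L by blast
  qed
  then show ?thesis using unit by blast
qed

lemma sqrt_lt: "0 \<le> y \<Longrightarrow> sqrt x < y \<Longrightarrow> x < y^2"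
  by (metis real_sqrt_abs abs_of_nonneg real_sqrt_less_iff)
lemma sqrt_le: "0 \<le> y \<Longrightarrow> x \<le> y^2 \<Longrightarrow> sqrt x \<le> y"
  by (metis real_sqrt_abs abs_of_nonneg real_sqrt_le_iff)

lemma near_X:
  assumes K: "K > 0" and z: "(x,y,t) \<in> hnbhd {(u,0,0) | u. u \<in> (UNIV::real set)} K"
  shows "\<bar>y\<bar> \<le> 2*K \<and> \<bar>t - x*y/2\<bar> \<le> 8*K^2"
proof -
  let ?X = "{(u,0,0) | u. u \<in> (UNIV::real set)} :: hpt set"
  have "hdist_set (x,y,t) ?X < 2*K" using z K unfolding hnbhd_def by simp
  then have "\<exists>d\<in>(\<lambda>e. hdist (x,y,t) e) ` ?X. d < 2*K"
    unfolding hdist_set_def by (intro cInf_lessD) auto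
  then obtain u where "hdist (x,y,t) (u,0,0) < 2*K" by auto
  then have h1: "sqrt ((x-u)^2 + y^2) < 2*K" and h2: "sqrt \<bar>t - u*y/2\<bar> < 2*K"
    unfolding hdist_def by (auto simp: algebra_simps)
  have a1: "(x-u)^2 + y^2 < (2*K)^2" using sqrt_lt[OF _ h1] K by simp
  have a2: "\<bar>t - u*y/2\<bar> < (2*K)^2" using sqrt_lt[OF _ h2] K by simp
  have K2: "(2*K)^2 = 4*K^2" by (simp add: power_mult_distrib)
  have y: "y^2 \<le> (2*K)^2" using a1 zero_le_power2[of "x-u"] by linarith
  have yb: "\<bar>y\<bar> \<le> 2*K" using y K abs_le_square_iff[of y "2*K"] by simp
  have c: "\<bar>(x-u)*y\<bar> \<le> ((x-u)^2 + y^2)/2"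
    using sum_squares_bound[of "\<bar>x-u\<bar>" "\<bar>y\<bar>"] by (simp add: abs_mult)
  have "t - x*y/2 = (t - u*y/2) - (x-u)*y/2" by (simp add: field_simps)
  then have "\<bar>t - x*y/2\<bar> \<le> \<bar>t - u*y/2\<bar> + \<bar>(x-u)*y\<bar>/2" by simp
  moreover have "\<bar>(x-u)*y\<bar>/2 \<le> K^2"
  proof -
    have *: "\<And>P Q. P < 4*K^2 \<Longrightarrow> Q \<le> P/2 \<Longrightarrow> Q/2 \<le> K^2" by linarith
    show ?thesis using *[OF a1[unfolded K2] c] .
  qed
  moreover have "\<bar>t - u*y/2\<bar> \<le> 4*K^2" using a2 K2 by linarith
  ultimately have "\<bar>t - x*y/2\<bar> \<le> 8*K^2" using K by (smt (verit) zero_le_power2)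
  then show ?thesis using yb by simp
qed


lemma sqrt_le_imp: "sqrt (X::real) \<le> K \<Longrightarrow> 0 \<le> X \<Longrightarrow> X \<le> K^2"
  by (metis order.trans real_sqrt_ge_zero real_sqrt_le_iff')

lemma sq_abs_le: "(u::real)^2 \<le> K^2 \<Longrightarrow> 0 \<le> K \<Longrightarrow> \<bar>u\<bar> \<le> K"
  using abs_le_square_iff[of u K] by simp

lemma fid: "(t0::real) + \<sigma>/2*(x0*b - y0*a) - (x0+\<sigma>*a)*(y0+\<sigma>*b)/2 = (t0 - x0*y0/2) - \<sigma>*(a*y0) - \<sigma>^2*(a*b)/2"
  by (simp add: field_simps power2_eq_square)

lemma core:
  fixes K S a b x0 y0 t0 :: real
  assumes K: "K > 0" and S: "S \<ge> 4*K" and ab: "a^2+b^2 = 1"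
  and z0: "hnorm (x0,y0,t0) \<le> K"
  and L2: "L2 = {hmult (x0,y0,t0) (\<sigma>*a, \<sigma>*b, 0) | \<sigma>. \<sigma> \<in> (UNIV::real set)}"
  and hyp: "\<And>x y t. (x,y,t) \<in> L2 \<Longrightarrow> hnorm (x,y,t) \<le> 2*S \<Longrightarrow> \<bar>y\<bar> \<le> 2*K \<and> \<bar>t - x*y/2\<bar> \<le> 8*K^2"
  shows "\<forall>x y t. (x,y,t) \<in> L2 \<and> hnorm (x,y,t) \<le> K \<longrightarrow>
           S*\<bar>y\<bar> \<le> 20*K^2 \<and> S^2*\<bar>t - (t0 - x0*y0/2) - x*y/2\<bar> \<le> 16*K^3*S + 64*K^4"
proof -
  have Spos: "S > 0" using K S by linarith
  have h0: "x0^2+y0^2 \<le> K^2" using z0 sqrt_le_imp[of "x0^2+y0^2" K] by simp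
  have t0b: "\<bar>t0\<bar> \<le> K^2" using z0 sqrt_le_imp[of "\<bar>t0\<bar>" K] by simp
  define P where "P \<sigma> = (x0+\<sigma>*a, y0+\<sigma>*b, t0 + \<sigma>/2*(x0*b - y0*a))" for \<sigma>
  have Pin: "P \<sigma> \<in> L2" for \<sigma>
  proof -
    have "hmult (x0,y0,t0) (\<sigma>*a, \<sigma>*b, 0) = P \<sigma>" unfolding P_def by (simp add: algebra_simps)
    then show ?thesis unfolding L2 by (metis (mono_tags, lifting) UNIV_I mem_Collect_eq)
  qed
  have idcs: "(a*x0 + b*y0)^2 + (x0*b - y0*a)^2 = (a^2+b^2)*(x0^2+y0^2)" by algebra
  have cs1: "\<bar>a*x0 + b*y0\<bar> \<le> K"
    using idcs ab h0 K by (intro sq_abs_le) (auto, smt (verit) zero_le_power2)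
  have cs2: "\<bar>x0*b - y0*a\<bar> \<le> K"
    using idcs ab h0 K by (intro sq_abs_le) (auto, smt (verit) zero_le_power2)
  have normP: "hnorm (P \<sigma>) \<le> 2*S" if s: "\<bar>\<sigma>\<bar> \<le> S" for \<sigma>
  proof -
    have e1: "(x0+\<sigma>*a)^2+(y0+\<sigma>*b)^2 = (x0^2+y0^2) + 2*(\<sigma>*(a*x0+b*y0)) + \<sigma>^2*(a^2+b^2)"
      by algebra
    have m1: "\<bar>\<sigma>*(a*x0+b*y0)\<bar> \<le> S*K" unfolding abs_mult
      using s cs1 K by (intro mult_mono) auto
    have m2: "\<sigma>^2 \<le> S^2" using s abs_le_square_iff[of \<sigma> S] Spos by simp
    have m3: "K^2 \<le> S^2" "S*K \<le> S^2" using K S Spos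
      by (auto simp: power2_eq_square intro!: mult_mono)
    have hz: "(x0+\<sigma>*a)^2+(y0+\<sigma>*b)^2 \<le> (2*S)^2"
      unfolding e1 ab using h0 m1 m2 m3 by (simp add: power_mult_distrib; linarith)
    have m4: "\<bar>\<sigma>/2*(x0*b - y0*a)\<bar> \<le> S*K/2" unfolding abs_mult
      using s cs2 K by (auto intro!: mult_mono)
    have tz: "\<bar>t0 + \<sigma>/2*(x0*b - y0*a)\<bar> \<le> (2*S)^2"
      using t0b m4 m3 by (simp add: power_mult_distrib; linarith)
    show ?thesis unfolding P_def using hz tz sqrt_le[of "2*S"] Spos by simp
  qed
  define C where "C = t0 - x0*y0/2"
  have fP: "\<bar>C - \<sigma>*(a*y0) - \<sigma>^2*(a*b)/2\<bar> \<le> 8*K^2 \<and> \<bar>y0 + \<sigma>*b\<bar> \<le> 2*K" if "\<bar>\<sigma>\<bar> \<le> S" for \<sigma>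
  proof -
    have "\<bar>y0+\<sigma>*b\<bar> \<le> 2*K \<and> \<bar>(t0 + \<sigma>/2*(x0*b - y0*a)) - (x0+\<sigma>*a)*(y0+\<sigma>*b)/2\<bar> \<le> 8*K^2"
      using hyp[of "x0+\<sigma>*a" "y0+\<sigma>*b" "t0 + \<sigma>/2*(x0*b - y0*a)"] Pin[of \<sigma>] normP[OF that]
      unfolding P_def by blast
    then show ?thesis unfolding fid C_def by simp
  qed
  have f1: "\<bar>C - S*(a*y0) - S^2*(a*b)/2\<bar> \<le> 8*K^2" "\<bar>y0 + S*b\<bar> \<le> 2*K"
    using fP[of S] Spos by auto
  have f2: "\<bar>C + S*(a*y0) - S^2*(a*b)/2\<bar> \<le> 8*K^2" "\<bar>y0 - S*b\<bar> \<le> 2*K"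
    using fP[of "-S"] Spos by auto
  have f3: "\<bar>C\<bar> \<le> 8*K^2" using fP[of 0] Spos by auto
  have Sb: "\<bar>S*b\<bar> \<le> 2*K" using f1(2) f2(2) by linarith
  have Say: "\<bar>S*(a*y0)\<bar> \<le> 8*K^2" using f1(1) f2(1) by linarith
  have Sab: "\<bar>S^2*(a*b)\<bar> \<le> 32*K^2" using f1(1) f2(1) f3 by linarith
  have "(S*b)^2 \<le> (2*K)^2" using Sb K abs_le_square_iff[of "S*b" "2*K"] by simp
  then have "S^2*b^2 \<le> 4*K^2" by (simp add: power_mult_distrib)
  moreover have "16*K^2 \<le> S^2"
  proof -
    have "(4*K)^2 \<le> S^2" using S K by (intro power_mono) auto
    then show ?thesis by (simp add: power_mult_distrib)
  qed
  ultimately have "S^2*(4*b^2) \<le> S^2*1" by linarith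
  then have "4*b^2 \<le> 1" using Spos by (simp add: mult_le_cancel_left)
  then have "1 \<le> 4*a^2" using ab by linarith
  then have "(1/2)^2 \<le> a^2" by (simp add: power_divide)
  then have a2: "1/2 \<le> \<bar>a\<bar>" using abs_le_square_iff[of "1/2" a] by simp
  have "S*\<bar>y0\<bar>*(1/2) \<le> S*\<bar>y0\<bar>*\<bar>a\<bar>" using a2 Spos by (intro mult_left_mono) auto
  moreover have "S*\<bar>y0\<bar>*\<bar>a\<bar> = \<bar>S*(a*y0)\<bar>" using Spos by (simp add: abs_mult)
  ultimately have Sy0: "S*\<bar>y0\<bar> \<le> 16*K^2" using Say by linarith
  have "S^2*\<bar>b\<bar>*(1/2) \<le> S^2*\<bar>b\<bar>*\<bar>a\<bar>" using a2 Spos by (intro mult_left_mono) auto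
  moreover have "S^2*\<bar>b\<bar>*\<bar>a\<bar> = \<bar>S^2*(a*b)\<bar>" using Spos by (simp add: abs_mult)
  ultimately have S2b: "S^2*\<bar>b\<bar> \<le> 64*K^2" using Sab by linarith
  show ?thesis
  proof (intro allI impI, elim conjE)
    fix x y t assume xin: "(x,y,t) \<in> L2" and xn: "hnorm (x,y,t) \<le> K"
    obtain \<sigma> where "(x,y,t) = hmult (x0,y0,t0) (\<sigma>*a, \<sigma>*b, 0)" using xin unfolding L2 by blast
    then have xs: "x = x0+\<sigma>*a" "y = y0+\<sigma>*b" "t = t0 + \<sigma>/2*(x0*b - y0*a)"
      by (auto simp: algebra_simps)
    have hxy: "x^2+y^2 \<le> K^2" using xn sqrt_le_imp[of "x^2+y^2" K] by simp
    have "\<sigma>^2 = \<sigma>^2*(a^2+b^2)" using ab by simp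
    also have "\<dots> = (x-x0)^2 + (y-y0)^2" unfolding xs by algebra
    also have "\<dots> \<le> 2*(x^2+y^2) + 2*(x0^2+y0^2)"
      using zero_le_power2[of "x+x0"] zero_le_power2[of "y+y0"] by (simp add: power2_eq_square algebra_simps)
    finally have "\<sigma>^2 \<le> (2*K)^2" using hxy h0 by (simp add: power_mult_distrib)
    then have sb: "\<bar>\<sigma>\<bar> \<le> 2*K" using K by (intro sq_abs_le) auto
    have "S*\<bar>y\<bar> \<le> S*(\<bar>y0\<bar> + \<bar>\<sigma>\<bar>*\<bar>b\<bar>)" unfolding xs using Spos
      by (intro mult_left_mono) (auto simp: abs_mult[symmetric] abs_triangle_ineq)
    also have "\<dots> = S*\<bar>y0\<bar> + \<bar>\<sigma>\<bar>*\<bar>S*b\<bar>" using Spos by (simp add: abs_mult algebra_simps)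
    also have "\<dots> \<le> 16*K^2 + (2*K)*(2*K)" by (rule add_mono[OF Sy0 mult_mono[OF sb Sb]]) (use K in auto)
    finally have r1: "S*\<bar>y\<bar> \<le> 20*K^2" by (simp add: power2_eq_square)
    have "t - (t0 - x0*y0/2) - x*y/2 = - \<sigma>*(a*y0) - \<sigma>^2*(a*b)/2"
      using fid[of t0 \<sigma> x0 b y0 a] unfolding xs by simp
    then have "S^2*\<bar>t - (t0 - x0*y0/2) - x*y/2\<bar> = S^2*\<bar>\<sigma>*(a*y0) + \<sigma>^2*(a*b)/2\<bar>"
      by (simp add: abs_minus_commute) (smt (verit))
    also have "\<dots> \<le> S^2*(\<bar>\<sigma>*(a*y0)\<bar> + \<bar>\<sigma>^2*(a*b)\<bar>/2)" using Spos
      by (intro mult_left_mono) (auto simp: abs_triangle_ineq)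
    also have "\<dots> = (S*\<bar>\<sigma>\<bar>)*\<bar>S*(a*y0)\<bar> + \<sigma>^2*\<bar>S^2*(a*b)\<bar>/2"
      using Spos by (simp add: abs_mult algebra_simps power2_eq_square)
    also have "\<dots> \<le> (S*(2*K))*(8*K^2) + (2*K)^2*(32*K^2)/2"
    proof (intro add_mono divide_right_mono mult_mono)
      show "(2*K)^2 \<ge> \<sigma>^2" using \<open>\<sigma>^2 \<le> (2*K)^2\<close> .
    qed (use Spos sb Say Sab K in auto)
    also have "\<dots> = 16*K^3*S + 64*K^4" by (simp add: power2_eq_square power3_eq_cube algebra_simps)
      (simp add: power_def)
    finally show "S*\<bar>y\<bar> \<le> 20*K^2 \<and> S^2*\<bar>t - (t0 - x0*y0/2) - x*y/2\<bar> \<le> 16*K^3*S + 64*K^4"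
      using r1 by simp
  qed
qed


lemma hnorm_nonneg: "hnorm z \<ge> 0"
  by (cases z) (auto simp: le_max_iff_disj)

lemma hdist_nonneg: "hdist z w \<ge> 0" unfolding hdist_def by (rule hnorm_nonneg)

lemma hball0: "hball (0,0,0) \<rho> = {q. hnorm q \<le> \<rho>}"
  unfolding hball_def hdist_def by (auto; case_tac x; auto)

lemma hdist_set_le: "e \<in> E \<Longrightarrow> hdist z e \<le> d \<Longrightarrow> hdist_set z E \<le> d"
  unfolding hdist_set_def
  by (rule order.trans[OF cInf_lower]) (auto intro: hdist_nonneg simp: bdd_below_def)

lemma norm_main:
  fixes \<epsilon> H r S :: real
  assumes eps: "0 < \<epsilon>" "\<epsilon> < 1" and H: "H \<ge> 1" and r: "r > 0"
  and Sdef: "S = 500*H^3*r/\<epsilon>^2"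
  and L2: "horizontal_line L2"
  and hyp: "hball (0,0,0) (2*S) \<inter> L2 \<subseteq> hnbhd {(u,0,0) | u. u \<in> (UNIV::real set)} (H*r)"
  shows "\<exists>T. hball (0,0,0) (H*r) \<inter> L2 \<subseteq> hnbhd {(u,0,T) | u. u \<in> (UNIV::real set)} (\<epsilon>*r)"
proof (cases "hball (0,0,0) (H*r) \<inter> L2 = {}")
  case True then show ?thesis by auto
next
  case False
  define K where "K = H*r"
  have K: "K > 0" unfolding K_def using H r by simp
  have Spos: "S > 0" unfolding Sdef using H r eps by simp
  have KS: "K^2/S = r*\<epsilon>^2/(500*H)" "K^3/S = r^2*\<epsilon>^2/500"
    unfolding K_def Sdef using H r eps by (simp_all add: field_simps power2_eq_square power3_eq_cube)
  have u1: "K^2/S \<le> \<epsilon>*r/500"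
  proof -
    have "r*\<epsilon>^2/(500*H) \<le> r*\<epsilon>^2/500" using H r by (intro divide_left_mono) auto
    also have "\<dots> \<le> \<epsilon>*r/500" using eps r by (simp add: power2_eq_square mult_left_le)
    finally show ?thesis using KS by simp
  qed
  have S4: "S \<ge> 4*K"
  proof -
    have "4*K \<le> 500*K" using K by simp
    also have "\<dots> = 500*H*r" unfolding K_def by simp
    also have "\<dots> \<le> 500*H^3*r"
    proof -
      have "1*1 \<le> H*H" using H by (intro mult_mono) auto
      then have "H*1 \<le> H*(H*H)" using H by (intro mult_left_mono) auto
      then have "H \<le> H^3" by (simp add: power3_eq_cube)
      then show ?thesis using r by (intro mult_right_mono) auto
    qed
    also have "\<dots> \<le> 500*H^3*r/\<epsilon>^2" using eps H r
      by (simp add: le_divide_eq power2_eq_square mult_le_cancel_left1 mult_left_le mult_le_one)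
    finally show ?thesis unfolding Sdef .
  qed
  from False obtain z0 where z0: "z0 \<in> hball (0,0,0) K" "z0 \<in> L2" unfolding K_def by blast
  obtain x0 y0 t0 where z0e: "z0 = (x0,y0,t0)" by (cases z0) auto
  obtain a b where ab: "a^2+b^2 = 1" and L2e: "L2 = {hmult z0 (\<sigma>*a, \<sigma>*b, 0) | \<sigma>. \<sigma> \<in> (UNIV::real set)}"
    using reparam[OF L2 z0(2)] by blast
  have core': "\<forall>x y t. (x,y,t) \<in> L2 \<and> hnorm (x,y,t) \<le> K \<longrightarrow>
           S*\<bar>y\<bar> \<le> 20*K^2 \<and> S^2*\<bar>t - (t0 - x0*y0/2) - x*y/2\<bar> \<le> 16*K^3*S + 64*K^4"
  proof (rule core[OF K S4 ab])
    show "hnorm (x0,y0,t0) \<le> K" using z0(1) z0e hball0 by auto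
    show "L2 = {hmult (x0,y0,t0) (\<sigma>*a, \<sigma>*b, 0) | \<sigma>. \<sigma> \<in> (UNIV::real set)}" using L2e z0e by simp
    fix x y t assume "(x,y,t) \<in> L2" "hnorm (x,y,t) \<le> 2*S"
    then have "(x,y,t) \<in> hnbhd {(u,0,0) | u. u \<in> (UNIV::real set)} K" using hyp hball0 K_def by auto
    then show "\<bar>y\<bar> \<le> 2*K \<and> \<bar>t - x*y/2\<bar> \<le> 8*K^2" using near_X K by blast
  qed
  define C where "C = t0 - x0*y0/2"
  show ?thesis
  proof (intro exI[of _ C] subsetI)
    fix z assume zin: "z \<in> hball (0,0,0) (H*r) \<inter> L2"
    obtain x y t where ze: "z = (x,y,t)" by (cases z) auto
    have "hnorm (x,y,t) \<le> K" using zin ze hball0 K_def by auto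
    then have c1: "S*\<bar>y\<bar> \<le> 20*K^2" and c2: "S^2*\<bar>t - C - x*y/2\<bar> \<le> 16*K^3*S + 64*K^4"
      using core' zin ze C_def by auto
    have "\<bar>y\<bar> \<le> 20*(K^2/S)" using c1 Spos by (simp add: field_simps)
    then have yb: "\<bar>y\<bar> \<le> \<epsilon>*r" using u1 eps r by linarith
    have "\<bar>t - C - x*y/2\<bar> \<le> 16*(K^3/S) + 64*(K^2/S)^2" using c2 Spos
      by (simp add: field_simps power2_eq_square power3_eq_cube power4_eq_xxxx)
    also have "\<dots> \<le> 16*(r^2*\<epsilon>^2/500) + 64*(\<epsilon>*r/500)^2"
      using u1 KS(2) H r by (intro add_mono mult_left_mono power_mono) (auto simp: KS(1) intro!: divide_nonneg_pos mult_nonneg_nonneg) 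
    also have "\<dots> \<le> (\<epsilon>*r)^2" by (simp add: power_mult_distrib power_divide)
    finally have tb: "\<bar>t - C - x*y/2\<bar> \<le> (\<epsilon>*r)^2" .
    have "hdist z (x,0,C) \<le> \<epsilon>*r"
      unfolding ze hdist_def using yb tb eps r sqrt_le[of "\<epsilon>*r"]
      by (simp add: algebra_simps)
    then show "z \<in> hnbhd {(u,0,C) | u. u \<in> (UNIV::real set)} (\<epsilon>*r)"
      unfolding hnbhd_def by (auto intro!: hdist_set_le)
  qed
qed


lemma hassoc: "hmult (hmult u v) w = hmult u (hmult v w)"
  by (cases u, cases v, cases w) (auto simp: algebra_simps)

lemma hinv_self: "hmult (hinv p) p = (0,0,0)"
  by (cases p) auto

lemma eps_powr: "0 < (\<epsilon>::real) \<Longrightarrow> \<epsilon> powr (-2) = 1/\<epsilon>^2"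
  by (simp add: powr_minus powr_numeral divide_inverse)

lemma image_param:
  assumes "\<And>\<sigma>. f (g \<sigma>) = h \<sigma>"
  shows "f ` {g \<sigma> | \<sigma>. \<sigma> \<in> (UNIV::real set)} = {h \<sigma> | \<sigma>. \<sigma> \<in> (UNIV::real set)}"
proof (intro set_eqI iffI)
  fix w assume "w \<in> f ` {g \<sigma> | \<sigma>. \<sigma> \<in> (UNIV::real set)}"
  then obtain \<sigma> where "w = f (g \<sigma>)" by blast
  then have "w = h \<sigma>" using assms by simp
  then show "w \<in> {h \<sigma> | \<sigma>. \<sigma> \<in> (UNIV::real set)}" by blast
next
  fix w assume "w \<in> {h \<sigma> | \<sigma>. \<sigma> \<in> (UNIV::real set)}"
  then obtain \<sigma> where "w = h \<sigma>" by blast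
  then have "w = f (g \<sigma>)" using assms by simp
  then show "w \<in> f ` {g \<sigma> | \<sigma>. \<sigma> \<in> (UNIV::real set)}" by blast
qed

theorem lemma3p5:
  "\<exists>A::real. A \<ge> 10 \<and>
    (\<forall>\<epsilon> H L1 L2 p r.
       0 < \<epsilon> \<and> \<epsilon> < 1 \<and> H \<ge> 1 \<and>
       horizontal_line L1 \<and> horizontal_line L2 \<and> p \<in> L1 \<and> r > 0 \<and>
       hball p (A * H^3 * \<epsilon> powr (-2) * r) \<inter> L2 \<subseteq> hnbhd L1 (H * r)
       \<longrightarrow> (\<exists>L. horizontal_line L \<and> L \<subseteq> vplane L1 \<and>
                hball p (H * r) \<inter> L2 \<subseteq> hnbhd L (\<epsilon> * r)))"
proof (intro exI[of _ 1000] conjI allI impI, simp, elim conjE)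
  fix \<epsilon> H r :: real and L1 L2 p
  assume eps: "0 < \<epsilon>" "\<epsilon> < 1" and H: "H \<ge> 1" and hL1: "horizontal_line L1"
    and hL2: "horizontal_line L2" and pL1: "p \<in> L1" and r: "r > 0"
    and hyp: "hball p (1000 * H^3 * \<epsilon> powr (-2) * r) \<inter> L2 \<subseteq> hnbhd L1 (H * r)"
  define S where "S = 500*H^3*r/\<epsilon>^2"
  have RS: "1000 * H^3 * \<epsilon> powr (-2) * r = 2*S" unfolding S_def eps_powr[OF eps(1)] by simp
  obtain cc ss where cs: "cc^2+ss^2 = 1" and L1e: "L1 = {hmult p (\<sigma>*cc, \<sigma>* ss, 0) | \<sigma>. \<sigma> \<in> (UNIV::real set)}"
    using reparam[OF hL1 pL1] by blast
  define \<Phi> where "\<Phi> z = rot cc ss (hmult (hinv p) z)" for z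
  define \<Psi> where "\<Psi> w = hmult p (rot cc (-ss) w)" for w
  have PhiPsi: "\<Phi> (\<Psi> w) = w" for w unfolding \<Phi>_def \<Psi>_def using rot_rot1[OF cs] by simp
  have PsiPhi: "\<Psi> (\<Phi> z) = z" for z unfolding \<Phi>_def \<Psi>_def using rot_rot2[OF cs] by simp
  have dist: "hdist (\<Phi> z) (\<Phi> w) = hdist z w" for z w unfolding \<Phi>_def using hdist_Phi[OF cs] by simp
  have Phip: "\<Phi> p = (0,0,0)" unfolding \<Phi>_def hinv_self by simp
  have dset: "hdist_set (\<Phi> z) (\<Phi> ` E) = hdist_set z E" for z E
    unfolding hdist_set_def image_image dist ..
  have PhiL1: "\<Phi> ` L1 = {(u,0,0) | u. u \<in> (UNIV::real set)}"
  proof -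
    have e: "\<Phi> (hmult p (\<sigma>*cc, \<sigma>* ss, 0)) = (\<sigma>,0,0)" for \<sigma>
    proof -
      have "cc*(\<sigma>*cc) + ss*(\<sigma>* ss) = \<sigma>*(cc^2+ss^2)" "-ss*(\<sigma>*cc) + cc*(\<sigma>* ss) = 0" by algebra+
      then show ?thesis unfolding \<Phi>_def using cs by simp
    qed
    show ?thesis unfolding L1e by (rule image_param) (rule e)
  qed
  obtain q a b where ab: "(a,b) \<noteq> (0::real,0::real)" and L2e: "L2 = {hmult q (\<sigma> * a, \<sigma> * b, 0) | \<sigma>. \<sigma> \<in> (UNIV :: real set)}"
    using hL2 unfolding horizontal_line_def by blast
  have hL2': "horizontal_line (\<Phi> ` L2)"
  proof -
    have e: "\<Phi> (hmult q (\<sigma>*a, \<sigma>*b, 0)) = hmult (\<Phi> q) (\<sigma>*(cc*a+ss*b), \<sigma>*(-ss*a+cc*b), 0)" for \<sigma>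
      unfolding \<Phi>_def hassoc[symmetric] rot_hom[OF cs] by (simp add: algebra_simps)
    have "(cc*a+ss*b)^2 + (-ss*a+cc*b)^2 = (cc^2+ss^2)*(a^2+b^2)" by algebra
    then have "(cc*a+ss*b, -ss*a+cc*b) \<noteq> (0,0)" using ab cs by auto
    moreover have "\<Phi> ` L2 = {hmult (\<Phi> q) (\<sigma>*(cc*a+ss*b), \<sigma>*(-ss*a+cc*b), 0) | \<sigma>. \<sigma> \<in> (UNIV :: real set)}"
      unfolding L2e by (rule image_param) (rule e)
    ultimately show ?thesis unfolding horizontal_line_def by blast
  qed
  have hyp': "hball (0,0,0) (2*S) \<inter> \<Phi> ` L2 \<subseteq> hnbhd {(u,0,0) | u. u \<in> (UNIV::real set)} (H*r)"
  proof
    fix w assume "w \<in> hball (0,0,0) (2*S) \<inter> \<Phi> ` L2"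
    then obtain z where z: "z \<in> L2" "w = \<Phi> z" "hdist (\<Phi> z) (\<Phi> p) \<le> 2*S"
      unfolding hball_def Phip by auto
    then have "z \<in> hball p (1000 * H^3 * \<epsilon> powr (-2) * r) \<inter> L2" unfolding RS hball_def dist by auto
    then have "hdist_set z L1 \<le> H*r" using hyp unfolding hnbhd_def by auto
    then show "w \<in> hnbhd {(u,0,0) | u. u \<in> (UNIV::real set)} (H*r)"
      unfolding hnbhd_def z(2) PhiL1[symmetric] by (simp add: dset)
  qed
  obtain T where T: "hball (0,0,0) (H*r) \<inter> \<Phi> ` L2 \<subseteq> hnbhd {(u,0,T) | u. u \<in> (UNIV::real set)} (\<epsilon>*r)"
    using norm_main[OF eps H r S_def hL2' hyp'] by blast
  define L where "L = \<Psi> ` {(u,0,T) | u. u \<in> (UNIV::real set)}"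
  have PhiL: "\<Phi> ` L = {(u,0,T) | u. u \<in> (UNIV::real set)}" unfolding L_def image_image PhiPsi by simp
  have Psie: "\<Psi> (u,0,T) = hmult (hmult p (0,0,T)) (u*cc, u* ss, 0)" for u
    unfolding \<Psi>_def by (cases p) (auto simp: algebra_simps)
  have Psie2: "hproj (\<Psi> (u,0,T)) = hproj (hmult p (u*cc, u* ss, 0))" for u
    unfolding \<Psi>_def by (cases p) (auto simp: algebra_simps hproj_def)
  show "\<exists>L. horizontal_line L \<and> L \<subseteq> vplane L1 \<and> hball p (H * r) \<inter> L2 \<subseteq> hnbhd L (\<epsilon> * r)"
  proof (intro exI[of _ L] conjI)
    have "(cc,ss) \<noteq> (0,0)" using cs by auto
    moreover have "L = {hmult (hmult p (0,0,T)) (\<sigma>*cc, \<sigma>* ss, 0) | \<sigma>. \<sigma> \<in> (UNIV :: real set)}"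
      unfolding L_def by (rule image_param) (rule Psie)
    ultimately show "horizontal_line L" unfolding horizontal_line_def by blast
    show "L \<subseteq> vplane L1"
    proof
      fix w assume "w \<in> L"
      then obtain u where w: "w = \<Psi> (u,0,T)" unfolding L_def by blast
      have "hmult p (u*cc, u * ss, 0) \<in> L1" unfolding L1e by blast
      then have "hproj (\<Psi> (u,0,T)) \<in> hproj ` L1" unfolding Psie2 by (rule imageI)
      then show "w \<in> vplane L1" unfolding vplane_def w by simp
    qed
    show "hball p (H * r) \<inter> L2 \<subseteq> hnbhd L (\<epsilon> * r)"
    proof
      fix z assume "z \<in> hball p (H * r) \<inter> L2"
      then have "\<Phi> z \<in> hball (0,0,0) (H*r) \<inter> \<Phi> ` L2" unfolding hball_def Phip[symmetric] by (auto simp: dist)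
      then have "hdist_set (\<Phi> z) (\<Phi> ` L) \<le> \<epsilon>*r" using T unfolding PhiL hnbhd_def by auto
      then show "z \<in> hnbhd L (\<epsilon> * r)" unfolding dset hnbhd_def by simp
    qed
  qed
qed
end
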